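(* Let $N, R, k\in\mathbb{N}$. For every choice of bijections $g_1,\dots,g_R:[N]\to[N]$ there exists a depth-$k$ transformer (with learned embeddings) that, without Chain-of-Thought, solves the $k$-hop factual recall problem, i.e. on every input $(s_0,r_1,\dots,r_k)\in[N]\times[R]^k$ it correctly outputs $(g_{r_k}\circ\cdots\circ g_{r_1})(s_0)$, using either of the following architectures: (1) embedding dimension $d=\tilde O(k)$ and MLP width $O(N\cdot R)$; (2) embedding dimension $d=\tilde O(R^k)$ and MLP width $\tilde O(R^k)$.
   Context: Write $[N]=\{1,\dots,N\}$. Subjects are $[N]$, relations are $[R]$, each relation $r$ has a bijection $g_r:[N]\to[N]$. The transformer is over vocabulary $[N]\cup[R]$ with embeddings in $\mathbb{R}^d$; each layer applies (causal, softmax) multi-head self-attention $Z=\sum_h W_V^{(h)}X(A^{(h)})^\top$ with $A^{(h)}=\mathrm{softmax}((W_K^{(h)}X)^\top(W_Q^{(h)}X))$, a residual connection $\tilde X = Z+X$, and a column-wise ReLU MLP with residual connection $X'=\tilde X+\mathrm{MLP}(\tilde X)$; "depth $k$" means $k$ such layers, and MLP width is its hidden width. The notation $\tilde O(\cdot)$ suppresses logarithmic factors (in $N$, $R$, $k$). *)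

theory Defs
  imports Complex_Main
begin

text \<open>Vectors in R^d are functions nat => real (only indices < d are read);
  d x d' matrices are functions nat => nat => real.\<close>

type_synonym vec = "nat \<Rightarrow> real"
type_synonym mat = "nat \<Rightarrow> nat \<Rightarrow> real"

datatype token = Subj nat | Rel nat

definition vocab :: "nat \<Rightarrow> nat \<Rightarrow> token set" where
  "vocab N R = Subj ` {1..N} \<union> Rel ` {1..R}"

definition mv :: "nat \<Rightarrow> mat \<Rightarrow> vec \<Rightarrow> vec" where
  "mv n A x = (\<lambda>i. \<Sum>j<n. A i j * x j)"

definition ip :: "nat \<Rightarrow> vec \<Rightarrow> vec \<Rightarrow> real" where
  "ip n x y = (\<Sum>i<n. x i * y i)"

text \<open>An attention head: (W_Q, W_K, W_V), all d x d
  (W_K^T W_Q ranges over all d x d bilinear forms).\<close>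
type_synonym head = "mat \<times> mat \<times> mat"

definition attn_score :: "nat \<Rightarrow> head \<Rightarrow> (nat \<Rightarrow> vec) \<Rightarrow> nat \<Rightarrow> nat \<Rightarrow> real" where
  "attn_score d h X j i =
     (case h of (WQ, WK, WV) \<Rightarrow> ip d (mv d WK (X j)) (mv d WQ (X i)))"

definition attn_weight :: "nat \<Rightarrow> head \<Rightarrow> (nat \<Rightarrow> vec) \<Rightarrow> nat \<Rightarrow> nat \<Rightarrow> real" where
  "attn_weight d h X j i =
     exp (attn_score d h X j i) / (\<Sum>j'\<le>i. exp (attn_score d h X j' i))"

definition mhsa :: "nat \<Rightarrow> head list \<Rightarrow> (nat \<Rightarrow> vec) \<Rightarrow> (nat \<Rightarrow> vec)" where
  "mhsa d hs X = (\<lambda>i c. \<Sum>h\<leftarrow>hs. \<Sum>j\<le>i.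
       attn_weight d h X j i * mv d (snd (snd h)) (X j) c)"

definition mlp :: "nat \<Rightarrow> nat \<Rightarrow> mat \<Rightarrow> vec \<Rightarrow> mat \<Rightarrow> vec \<Rightarrow> vec \<Rightarrow> vec" where
  "mlp d m W1 b1 W2 b2 x =
     (let hid = (\<lambda>a. max 0 (mv d W1 x a + b1 a)) in (\<lambda>i. mv m W2 hid i + b2 i))"

type_synonym layer = "head list \<times> mat \<times> vec \<times> mat \<times> vec"

definition apply_layer :: "nat \<Rightarrow> nat \<Rightarrow> layer \<Rightarrow> (nat \<Rightarrow> vec) \<Rightarrow> (nat \<Rightarrow> vec)" where
  "apply_layer d m L X =
     (case L of (hs, W1, b1, W2, b2) \<Rightarrow>
        let Xt = (\<lambda>i c. mhsa d hs X i c + X i c)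
        in (\<lambda>i c. Xt i c + mlp d m W1 b1 W2 b2 (Xt i) c))"

record transformer =
  tf_dim :: nat
  tf_width :: nat
  tf_emb :: "token \<Rightarrow> vec"
  tf_layers :: "layer list"
  tf_unemb :: "token \<Rightarrow> vec"

definition tf_run :: "transformer \<Rightarrow> token list \<Rightarrow> (nat \<Rightarrow> vec)" where
  "tf_run T ts =
     foldl (\<lambda>X L. apply_layer (tf_dim T) (tf_width T) L X)
           (\<lambda>i. tf_emb T (ts ! i)) (tf_layers T)"

definition tf_logit :: "transformer \<Rightarrow> token list \<Rightarrow> token \<Rightarrow> real" where
  "tf_logit T ts t = ip (tf_dim T) (tf_unemb T t) (tf_run T ts (length ts - 1))"

definition tf_outputs :: "transformer \<Rightarrow> token set \<Rightarrow> token list \<Rightarrow> token \<Rightarrow> bool" where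
  "tf_outputs T V ts t \<longleftrightarrow> t \<in> V \<and> (\<forall>t'\<in>V. t' \<noteq> t \<longrightarrow> tf_logit T ts t' < tf_logit T ts t)"

definition khop :: "(nat \<Rightarrow> nat \<Rightarrow> nat) \<Rightarrow> nat \<Rightarrow> nat list \<Rightarrow> nat" where
  "khop g s0 rs = foldl (\<lambda>s r. g r s) s0 rs"

definition solves_khop :: "transformer \<Rightarrow> nat \<Rightarrow> nat \<Rightarrow> nat \<Rightarrow> (nat \<Rightarrow> nat \<Rightarrow> nat) \<Rightarrow> bool" where
  "solves_khop T N R k g \<longleftrightarrow>
     (\<forall>s0\<in>{1..N}. \<forall>rs. length rs = k \<longrightarrow> set rs \<subseteq> {1..R} \<longrightarrow>
        tf_outputs T (vocab N R) (Subj s0 # map Rel rs) (Subj (khop g s0 rs)))"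

end

theory Submission
  imports Defs
begin

lemma mv_zero[simp]: "mv d (\<lambda>_ _. 0) x = (\<lambda>_. 0)"
  by (simp add: mv_def)

lemma attn_weight_unif:
  "attn_weight d ((\<lambda>_ _. 0), (\<lambda>_ _. 0), V) X j i = 1 / (real i + 1)"
  by (simp add: attn_weight_def attn_score_def ip_def)

lemma mhsa_unif:
  "mhsa d [((\<lambda>_ _. 0), (\<lambda>_ _. 0), V)] X i c = (\<Sum>j\<le>i. mv d V (X j) c) / (real i + 1)"
  by (simp add: mhsa_def attn_weight_unif sum_divide_distrib)

lemma apply_layer_unif:
  "apply_layer d m ([((\<lambda>_ _. 0), (\<lambda>_ _. 0), V)], W1, b1, W2, b2) X i c =
    (let Xt = (\<lambda>i c. (\<Sum>j\<le>i. mv d V (X j) c) / (real i + 1) + X i c) in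
      Xt i c + ((\<Sum>a<m. W2 c a * max 0 (mv d W1 (Xt i) a + b1 a)) + b2 c))"
  by (simp add: apply_layer_def mhsa_unif mlp_def mv_def Let_def)

lemma foldl_layers:
  fixes lay :: "nat \<Rightarrow> layer"
  shows "foldl (\<lambda>X L. apply_layer d m L X) X0 (map lay [1..<Suc l]) =
     rec_nat X0 (\<lambda>n X. apply_layer d m (lay (Suc n)) X) l"
  by (induction l) auto

lemma sum_two_delta:
  fixes X :: "nat \<Rightarrow> real"
  assumes "co < d" "cq < d" "co \<noteq> cq"
  shows "(\<Sum>c<d. (if c = co then A else if c = cq then B else 0) * X c) = A * X co + B * X cq"
proof -
  have "(\<Sum>c<d. (if c = co then A else if c = cq then B else 0) * X c)
      = (\<Sum>c<d. (if c = co then A * X co else 0) + (if c = cq then B * X cq else 0))"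
    by (rule sum.cong) (use assms in auto)
  also have "\<dots> = A * X co + B * X cq" using assms by (simp add: sum.distrib)
  finally show ?thesis .
qed

lemma readout:
  assumes d: "co < tf_dim T" "cq < tf_dim T" "co \<noteq> cq"
    and U: "\<And>s. tf_unemb T (Subj s) = (\<lambda>c. if c = co then 2 * real s else if c = cq then (- ((real s)^2 * (real k + 1))) else 0)"
    and U2: "\<And>r. tf_unemb T (Rel r) = (\<lambda>c. 0)"
    and r1: "tf_run T ts (length ts - 1) co = real a"
    and r2: "tf_run T ts (length ts - 1) cq = 1 / (real k + 1)"
    and a: "a \<in> {1..N}"
  shows "tf_outputs T (vocab N R) ts (Subj a)"
proof -
  have LS: "tf_logit T ts (Subj s) = real a ^ 2 - (real s - real a)^2" for s
  proof -
    have "tf_logit T ts (Subj s) = 2 * real s * tf_run T ts (length ts - 1) co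
       + (- ((real s)^2 * (real k + 1))) * tf_run T ts (length ts - 1) cq"
      unfolding tf_logit_def ip_def U by (rule sum_two_delta[OF d])
    also have "\<dots> = real a ^ 2 - (real s - real a)^2" unfolding r1 r2
      by (simp add: power2_eq_square field_simps)
    finally show ?thesis .
  qed
  have LR: "tf_logit T ts (Rel r) = 0" for r
    unfolding tf_logit_def ip_def U2 by simp
  have apos: "real a > 0" using a by auto
  show ?thesis unfolding tf_outputs_def
  proof (intro conjI ballI impI)
    show "Subj a \<in> vocab N R" using a by (auto simp: vocab_def)
  next
    fix t' assume "t' \<in> vocab N R" "t' \<noteq> Subj a"
    then show "tf_logit T ts t' < tf_logit T ts (Subj a)"
    proof (cases t')
      case (Subj s)
      with \<open>t' \<noteq> Subj a\<close> have "real s \<noteq> real a" by auto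
      then have "(real s - real a)^2 > 0" by auto
      then show ?thesis using Subj LS by simp
    next
      case (Rel r)
      then show ?thesis using LR LS apos by simp
    qed
  qed
qed

lemma khop_Suc:
  assumes "l < length rs"
  shows "khop g s0 (take (Suc l) rs) = g (rs ! l) (khop g s0 (take l rs))"
  using assms by (simp add: khop_def take_Suc_conv_app_nth)

lemma khop_range:
  assumes "\<forall>r\<in>{1..R}. bij_betw (g r) {1..N} {1..N}" "s0 \<in> {1..N}" "set rs \<subseteq> {1..R}"
  shows "khop g s0 rs \<in> {1..N}"
  using assms(2,3)
proof (induction rs arbitrary: s0)
  case Nil then show ?case by (simp add: khop_def)
next
  case (Cons r rs)
  have r: "r \<in> {1..R}" using Cons.prems by simp
  have "g r s0 \<in> {1..N}" using bij_betw_apply[OF bspec[OF assms(1) r]] Cons.prems(1) by blast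
  then show ?case using Cons.IH[of "g r s0"] Cons.prems by (simp add: khop_def)
qed

lemma sum3:
  "(\<Sum>a<3*n. f (a div 3) (a mod 3)) = (\<Sum>q<n. f q 0 + f q 1 + f q (2::nat))"
proof (induction n)
  case 0 then show ?case by simp
next
  case (Suc n)
  have e: "(3*n+1) div 3 = n" "(3*n+1) mod 3 = 1" "(3*n+2) div 3 = n" "(3*n+2) mod 3 = 2"
    "(3*n) div 3 = n" "(3*n) mod 3 = 0" by presburger+
  have s: "3 * Suc n = Suc (Suc (Suc (3*n)))" by simp
  have "(\<Sum>a<3*Suc n. f (a div 3) (a mod 3)) = (\<Sum>a<3*n. f (a div 3) (a mod 3)) + f ((3*n) div 3) ((3*n) mod 3)
      + f ((3*n+1) div 3) ((3*n+1) mod 3) + f ((3*n+2) div 3) ((3*n+2) mod 3)"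
    unfolding s lessThan_Suc by (simp add: add.commute add.left_commute)
  then show ?case using Suc by (simp only: e sum.lessThan_Suc) (simp add: add.assoc)
qed

definition relu :: "real \<Rightarrow> real" where "relu x = max 0 x"
definition hat :: "real \<Rightarrow> real" where
  "hat x = 2 * relu (x + 1/2) - 4 * relu x + 2 * relu (x - 1/2)"

lemma hat0: "hat 0 = 1" by (simp add: hat_def relu_def)
lemma hat_far: "\<bar>x\<bar> \<ge> 1/2 \<Longrightarrow> hat x = 0"
  unfolding hat_def relu_def by (cases "x \<ge> 0") (simp_all add: max_def)

lemma hat_int: "hat (real a - real b) = (if a = b then 1 else 0)"
proof (cases "a = b")
  case False
  then have "\<bar>real a - real b\<bar> \<ge> 1" by linarith
  then show ?thesis using False hat_far by simp
qed (simp add: hat0)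

lemma sum_delta3:
  fixes x :: "nat \<Rightarrow> real"
  assumes "a < d" "b < d" "e < d"
  shows "(\<Sum>c<d. ((if c = a then \<alpha> else 0) + (if c = b then \<beta> else 0) + (if c = e then \<gamma> else 0)) * x c)
     = \<alpha> * x a + \<beta> * x b + \<gamma> * x e"
proof -
  have "(\<Sum>c<d. ((if c = a then \<alpha> else 0) + (if c = b then \<beta> else 0) + (if c = e then \<gamma> else 0)) * x c)
     = (\<Sum>c<d. (if c = a then \<alpha> * x a else 0) + (if c = b then \<beta> * x b else 0) + (if c = e then \<gamma> * x e else 0))"
    by (rule sum.cong) (auto simp: distrib_right)
  also have "\<dots> = \<alpha> * x a + \<beta> * x b + \<gamma> * x e" using assms by (simp add: sum.distrib)
  finally show ?thesis .
qed

lemma sum_delta2: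
  fixes x :: "nat \<Rightarrow> real"
  assumes "a < d" "b < d"
  shows "(\<Sum>c<d. ((if P \<and> c = a then 1 else 0) + (if Q \<and> c = b then 1 else 0)) * x c)
     = (if P then x a else 0) + (if Q then x b else 0)"
proof -
  have "(\<Sum>c<d. ((if P \<and> c = a then 1 else 0) + (if Q \<and> c = b then 1 else 0)) * x c)
     = (\<Sum>c<d. (if c = a then (if P then x a else 0) else 0) + (if c = b then (if Q then x b else 0) else 0))"
    by (rule sum.cong) (auto simp: distrib_right)
  also have "\<dots> = (if P then x a else 0) + (if Q then x b else 0)" using assms by (simp add: sum.distrib)
  finally show ?thesis .
qed

locale hop1 =
  fixes N R k :: nat and g :: "nat \<Rightarrow> nat \<Rightarrow> nat"
  assumes N1: "N \<ge> 1" and R1: "R \<ge> 1" and k1: "k \<ge> 1"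
    and bij: "\<forall>r\<in>{1..R}. bij_betw (g r) {1..N} {1..N}"
begin

definition "d1 = 4 + 2*k"
definition "cP = (0::nat)"
definition "cQ = (1::nat)"
definition "cR = (2::nat)"
definition "aidx m = 2 + 2*(m::nat)"
definition "sidx m = 3 + 2*(m::nat)"

lemma idx_simps[simp]:
  "cP \<noteq> cQ" "cP \<noteq> cR" "cQ \<noteq> cR" "cQ \<noteq> cP" "cR \<noteq> cP" "cR \<noteq> cQ"
  "sidx m \<noteq> cP" "sidx m \<noteq> cQ" "sidx m \<noteq> cR" "cP \<noteq> sidx m" "cQ \<noteq> sidx m" "cR \<noteq> sidx m"
  "aidx m \<noteq> cP" "aidx m \<noteq> cQ" "cP \<noteq> aidx m" "cQ \<noteq> aidx m"
  "aidx m \<noteq> sidx m'" "sidx m' \<noteq> aidx m"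
  "(aidx m = aidx m') = (m = m')" "(sidx m = sidx m') = (m = m')"
  "1 \<le> m \<Longrightarrow> aidx m \<noteq> cR" "1 \<le> m \<Longrightarrow> cR \<noteq> aidx m"
  by (auto simp: cP_def cQ_def cR_def aidx_def sidx_def) presburger+

lemma idx_lt[simp]: "cP < d1" "cQ < d1" "cR < d1" "m \<le> k \<Longrightarrow> aidx m < d1" "m \<le> k \<Longrightarrow> sidx m < d1"
  by (auto simp: cP_def cQ_def cR_def aidx_def sidx_def d1_def)

definition "m1 = 3*N*R"
definition emb1 :: "token \<Rightarrow> vec" where
  "emb1 t = (case t of Subj s \<Rightarrow> (\<lambda>c. if c = cP then 1 else if c = sidx 0 then real s else 0)
                     | Rel r \<Rightarrow> (\<lambda>c. if c = cR then real r else 0))"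
definition V1 :: "nat \<Rightarrow> mat" where
  "V1 l = (\<lambda>c c'. (if (l = 1 \<and> c = cQ) \<and> c' = cP then 1 else 0) + (if (c = aidx l) \<and> c' = sidx (l-1) then 1 else 0))"
definition "B1 = real ((k+2)*N*(R+2))"
definition "M1 = (real k + 1)^2 * (B1 + 1)"
definition W1a :: "nat \<Rightarrow> mat" where
  "W1a l = (\<lambda>a c'. (if c' = aidx l then real l + 1 else 0) + (if c' = cR then real N else 0) + (if c' = cQ then M1 else 0))"
definition "cen l q = real q + 1 + real N + M1 / (real l + 1)"
definition "off t = (if t = 0 then 1/2 else if t = (1::nat) then 0 else - 1/2)"
definition "coef t = (if t = 0 then 2 else if t = (1::nat) then -4 else (2::real))"
definition "val q = real (g (q div N + 1) (q mod N + 1))"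
definition b1a :: "nat \<Rightarrow> vec" where "b1a l = (\<lambda>a. off (a mod 3) - cen l (a div 3))"
definition W2a :: "nat \<Rightarrow> mat" where
  "W2a l = (\<lambda>c a. if c = sidx l then val (a div 3) * coef (a mod 3) else 0)"
definition lay1 :: "nat \<Rightarrow> layer" where
  "lay1 l = ([((\<lambda>_ _. 0), (\<lambda>_ _. 0), V1 l)], W1a l, b1a l, W2a l, (\<lambda>_. 0))"
definition unemb1 :: "token \<Rightarrow> vec" where
  "unemb1 t = (case t of Subj s \<Rightarrow> (\<lambda>c. if c = sidx k then 2 * real s else if c = cQ then (- ((real s)^2 * (real k + 1))) else 0)
                       | Rel r \<Rightarrow> (\<lambda>c. 0))"
definition T1 :: transformer where
  "T1 = \<lparr>tf_dim = d1, tf_width = m1, tf_emb = emb1, tf_layers = map lay1 [1..<Suc k], tf_unemb = unemb1\<rparr>"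

lemma coord_cases:
  assumes "c < d1"
  obtains "c = cP" | "c = cQ" | "c = cR" | "c = sidx 0" | m where "1 \<le> m" "m \<le> k" "c = aidx m"
    | m where "1 \<le> m" "m \<le> k" "c = sidx m"
proof -
  consider "c \<le> 3" | "c \<ge> 4" "even c" | "c \<ge> 4" "odd c" by linarith
  then show ?thesis
  proof cases
    case 1 then show ?thesis using that unfolding cP_def cQ_def cR_def sidx_def by linarith
  next
    case 2
    then have "c = 2 + 2*((c-2) div 2)" by presburger
    then obtain m where "c = 2 + 2*m" by blast
    then show ?thesis using that(5)[of m] 2 assms unfolding d1_def aidx_def by linarith
  next
    case 3
    then have "c = 3 + 2*((c-3) div 2)" by presburger
    then obtain m where "c = 3 + 2*m" by blast
    then show ?thesis using that(6)[of m] 3 assms unfolding d1_def sidx_def by linarith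
  qed
qed

lemma M1_ge: "M1 \<ge> B1 + 1"
proof -
  have "B1 \<ge> 0" by (simp add: B1_def)
  moreover have "(real k + 1)^2 \<ge> 1" by simp
  ultimately show ?thesis unfolding M1_def
    using mult_right_mono[of 1 "(real k + 1)^2" "B1 + 1"] by simp
qed

lemma pos_sep:
  assumes "i \<le> k" "l \<le> k" "i \<noteq> l"
  shows "\<bar>1/(real i + 1) - 1/(real l + 1)\<bar> \<ge> 1 / (real k + 1)^2"
proof -
  have eq: "1/(real i + 1) - 1/(real l + 1) = (real l - real i) / ((real i + 1) * (real l + 1))"
    by (simp add: field_simps)
  have "\<bar>real l - real i\<bar> \<ge> 1" using assms(3) by linarith
  moreover have "(real i + 1) * (real l + 1) \<le> (real k + 1)^2"
    using assms by (simp add: power2_eq_square mult_mono)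
  moreover have "(real i + 1) * (real l + 1) > 0" by simp
  ultimately have "\<bar>real l - real i\<bar> / ((real i + 1) * (real l + 1)) \<ge> 1 / (real k + 1)^2"
    by (simp add: frac_le divide_right_mono order_trans)
  then show ?thesis unfolding eq by (simp add: abs_divide)
qed

end

context hop1 begin
lemma sidx_prev: "1 \<le> m \<Longrightarrow> sidx (m - 1) \<noteq> aidx m'" by simp
end

locale inst1 = hop1 +
  fixes s0 :: nat and rs :: "nat list"
  assumes s0: "s0 \<in> {1..N}" and len: "length rs = k" and rsR: "set rs \<subseteq> {1..R}"
begin

definition "st l = khop g s0 (take l rs)"
definition "rv j = (if j = 0 then 0 else real (rs ! (j-1)))"
definition "ts = Subj s0 # map Rel rs"

definition E1 :: "nat \<Rightarrow> nat \<Rightarrow> nat \<Rightarrow> real" where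
  "E1 l j c = (if c = cP then (if j = 0 then 1 else 0)
    else if c = cQ then (if 1 \<le> l then 1 / (real j + 1) else 0)
    else if c = cR then rv j
    else if (\<exists>m. 1 \<le> m \<and> c = aidx m) then (let m = (c-2) div 2 in if m \<le> l \<and> m - 1 \<le> j then real (st (m - 1)) / (real j + 1) else 0)
    else if (\<exists>m. c = sidx m) then (let m = (c-3) div 2 in if m \<le> l \<and> j = m then real (st m) else 0)
    else 0)"

lemma E1_A: "1 \<le> m \<Longrightarrow> E1 l j (aidx m) = (if m \<le> l \<and> m - 1 \<le> j then real (st (m-1)) / (real j + 1) else 0)"
proof -
  assume m: "1 \<le> m"
  have d: "(aidx m - 2) div 2 = m" by (simp add: aidx_def)
  have "\<exists>m'. 1 \<le> m' \<and> aidx m = aidx m'" using m by blast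
  then show ?thesis unfolding E1_def using m d by (simp add: Let_def)
qed
lemma E1_S: "E1 l j (sidx m) = (if m \<le> l \<and> j = m then real (st m) else 0)"
proof -
  have d: "(sidx m - 3) div 2 = m" by (simp add: sidx_def)
  have "\<not> (\<exists>m'. 1 \<le> m' \<and> sidx m = aidx m')" by simp
  then show ?thesis unfolding E1_def using d by (simp add: Let_def)
qed
lemma E1_P: "E1 l j cP = (if j = 0 then 1 else 0)" unfolding E1_def by simp
lemma E1_Q: "E1 l j cQ = (if 1 \<le> l then 1 / (real j + 1) else 0)" unfolding E1_def by simp
lemma E1_R: "E1 l j cR = rv j" unfolding E1_def by simp

lemma st0: "st 0 = s0" by (simp add: st_def khop_def)
lemma st_Suc: "l < k \<Longrightarrow> st (Suc l) = g (rs ! l) (st l)"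
  unfolding st_def using khop_Suc len by simp
lemma st_range: "st l \<in> {1..N}"
proof -
  have "set (take l rs) \<subseteq> {1..R}" using set_take_subset[of l rs] rsR by blast
  then show ?thesis unfolding st_def by (rule khop_range[OF bij s0])
qed
lemma rs_range: "j < k \<Longrightarrow> rs ! j \<in> {1..R}"
  using rsR len nth_mem by blast

definition "X0 = (\<lambda>i. emb1 (ts ! i))"
definition "Xs l = rec_nat X0 (\<lambda>n X. apply_layer d1 m1 (lay1 (Suc n)) X) l"

lemma Xs_Suc: "Xs (Suc l) = apply_layer d1 m1 (lay1 (Suc l)) (Xs l)"
  by (simp add: Xs_def)

lemma base: "j \<le> k \<Longrightarrow> c < d1 \<Longrightarrow> X0 j c = E1 0 j c"
proof -
  assume j: "j \<le> k" and c: "c < d1"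
  show ?thesis
  proof (cases "j = 0")
    case True
    show ?thesis using c
      by (cases rule: coord_cases) (simp_all add: True X0_def ts_def emb1_def E1_P E1_Q E1_R E1_S E1_A rv_def st0)
  next
    case False
    then have tsj: "ts ! j = Rel (rs ! (j-1))" using j len by (cases j) (auto simp: ts_def)
    show ?thesis using c
      by (cases rule: coord_cases) (simp_all add: X0_def tsj emb1_def E1_P E1_Q E1_R E1_S E1_A rv_def False)
  qed
qed


lemma rv_range: "1 \<le> i \<Longrightarrow> i \<le> k \<Longrightarrow> rv i = real (rs ! (i-1)) \<and> rs ! (i-1) \<in> {1..R}"
  using rs_range[of "i-1"] by (simp add: rv_def)

lemma rv_bounds: "i \<le> k \<Longrightarrow> 0 \<le> rv i \<and> rv i \<le> real R"
proof (cases "i = 0")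
  case True then show ?thesis by (simp add: rv_def)
next
  case False
  assume "i \<le> k"
  then show ?thesis using rv_range[of i] False by auto
qed

lemma hat_combo: "coef 0 * max 0 (x + off 0) + coef 1 * max 0 (x + off 1) + coef 2 * max 0 (x + off 2) = hat x"
  by (simp add: coef_def off_def hat_def relu_def)

lemma hatsum:
  assumes l1: "1 \<le> l" and lk: "l \<le> k" and i: "i \<le> k"
    and tv: "tv = (real l + 1) * (if l - 1 \<le> i then real (st (l-1)) / (real i + 1) else 0) + real N * rv i + M1 / (real i + 1)"
  shows "(\<Sum>q<N*R. val q * hat (tv - cen l q)) = (if i = l then real (st l) else 0)"
proof (cases "i = l")
  case True
  define r where "r = rs ! (l-1)"
  have r: "r \<in> {1..R}" "rv l = real r" using rv_range[of l] l1 lk by (auto simp: r_def)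
  define s where "s = st (l-1)"
  have s: "s \<in> {1..N}" using st_range by (simp add: s_def)
  define q0 where "q0 = (s - 1) + N * (r - 1)"
  have tvl: "tv = real s + real N * real r + M1 / (real l + 1)"
    using tv True r by (simp add: s_def)
  have q0r: "real q0 = real s - 1 + real N * (real r - 1)" unfolding q0_def using r s by (simp add: of_nat_diff)
  have diff: "tv - cen l q = real q0 - real q" for q
    unfolding tvl cen_def q0r by (simp add: algebra_simps)
  have q0lt: "q0 < N * R"
  proof -
    have "q0 \<le> (N - 1) + N * (R - 1)" unfolding q0_def using r s
      by (intro add_mono mult_le_mono) auto
    also have "\<dots> = N * R - 1" using N1 R1 by (simp add: algebra_simps diff_mult_distrib2)
    finally show ?thesis using N1 R1 by (metis Suc_le_eq diff_less le_trans less_one mult_pos_pos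
          nat_less_le not_le zero_less_one)
  qed
  have "(\<Sum>q<N*R. val q * hat (tv - cen l q)) = (\<Sum>q<N*R. if q0 = q then val q else 0)"
    by (rule sum.cong) (simp_all add: diff hat_int)
  also have "\<dots> = val q0" using q0lt by simp
  also have "val q0 = real (g r s)"
  proof -
    have "s - 1 < N" using s by auto
    then have "q0 div N = r - 1" "q0 mod N = s - 1" unfolding q0_def using N1 by auto
    then show ?thesis unfolding val_def using r s by simp
  qed
  also have "g r s = st l" using st_Suc[of "l-1"] l1 lk by (simp add: r_def s_def)
  finally show ?thesis using True by simp
next
  case False
  have far: "hat (tv - cen l q) = 0" if q: "q < N * R" for q
  proof (rule hat_far)
    define A where "A = (real l + 1) * (if l - 1 \<le> i then real (st (l-1)) / (real i + 1) else 0)"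
    define Y where "Y = A + real N * rv i - (real q + 1 + real N)"
    have eq: "tv - cen l q = Y + M1 * (1 / (real i + 1) - 1 / (real l + 1))"
      unfolding tv Y_def A_def cen_def by (simp add: algebra_simps add_divide_distrib)
    have st: "real (st (l-1)) \<le> real N" "0 \<le> real (st (l-1))" using st_range[of "l-1"] by auto
    have A0: "0 \<le> A"
      using st by (simp add: A_def)
    have A1: "A \<le> (real k + 1) * real N"
      unfolding A_def
    proof -
      have "real N * 1 \<le> real N * (real i + 1)" by (intro mult_left_mono) auto
      then have "(if l - 1 \<le> i then real (st (l-1)) / (real i + 1) else 0) \<le> real N"
        using st by (auto simp: divide_le_eq)
      moreover have "real l + 1 \<le> real k + 1" using lk by simp
      ultimately show "(real l + 1) * (if l - 1 \<le> i then real (st (l-1)) / (real i + 1) else 0) \<le> (real k + 1) * real N" using st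
        by (intro mult_mono) auto
    qed
    have rvb: "0 \<le> rv i" "rv i \<le> real R" using rv_bounds[OF i] by auto
    have NR: "real N * rv i \<le> real N * real R" "0 \<le> real N * rv i" using rvb by (auto intro: mult_left_mono)
    have qb: "real q + 1 \<le> real N * real R" using q by (metis of_nat_1 of_nat_add of_nat_le_iff of_nat_mult Suc_leI add.commute plus_1_eq_Suc)
    have B1e: "B1 = real k * real N * real R + 2 * (real k * real N) + 2 * (real N * real R) + 4 * real N"
      unfolding B1_def by (simp add: algebra_simps)
    have pos: "0 \<le> real k * real N * real R" "0 \<le> real k * real N" by auto
    have A1': "A \<le> real k * real N + real N" using A1 by (simp add: algebra_simps)
    have pos2: "0 \<le> real N * real R" by simp
    have Yb: "\<bar>Y\<bar> \<le> B1" unfolding Y_def B1e abs_le_iff using A0 A1' NR qb pos pos2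
      by linarith
    have sep: "\<bar>1 / (real i + 1) - 1 / (real l + 1)\<bar> \<ge> 1 / (real k + 1)^2"
      using pos_sep[OF i lk False] .
    have "\<bar>M1 * (1 / (real i + 1) - 1 / (real l + 1))\<bar> \<ge> M1 * (1 / (real k + 1)^2)"
    proof -
      have "B1 \<ge> 0" by (simp add: B1_def)
      then have M0: "M1 \<ge> 0" using M1_ge by linarith
      then have "\<bar>M1 * (1 / (real i + 1) - 1 / (real l + 1))\<bar> = M1 * \<bar>1 / (real i + 1) - 1 / (real l + 1)\<bar>"
        by (simp add: abs_mult)
      also have "\<dots> \<ge> M1 * (1 / (real k + 1)^2)" using sep M0 by (rule mult_left_mono)
      finally show ?thesis .
    qed
    moreover have "M1 * (1 / (real k + 1)^2) = B1 + 1" unfolding M1_def by simp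
    ultimately have "\<bar>M1 * (1 / (real i + 1) - 1 / (real l + 1))\<bar> \<ge> B1 + 1" by simp
    then show "\<bar>tv - cen l q\<bar> \<ge> 1/2" unfolding eq using Yb by linarith
  qed
  then show ?thesis using False by simp
qed

end

context inst1 begin

lemma hat_val: "v * coef 0 * max 0 (x + off 0) + v * coef 1 * max 0 (x + off 1) + v * coef 2 * max 0 (x + off 2) = v * hat x"
proof -
  have "v * coef 0 * max 0 (x + off 0) + v * coef 1 * max 0 (x + off 1) + v * coef 2 * max 0 (x + off 2)
    = v * (coef 0 * max 0 (x + off 0) + coef 1 * max 0 (x + off 1) + coef 2 * max 0 (x + off 2))"
    by (simp only: distrib_left mult.assoc)
  then show ?thesis by (simp only: hat_combo)
qed

lemma step1:
  assumes l1: "1 \<le> l" and lk: "l \<le> k"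
    and X: "\<And>j c. j \<le> k \<Longrightarrow> c < d1 \<Longrightarrow> X j c = E1 (l-1) j c"
    and i: "i \<le> k" and c: "c < d1"
  shows "apply_layer d1 m1 (lay1 l) X i c = E1 l i c"
proof -
  have lk': "l - 1 \<le> k" using lk by simp
  have mvV: "mv d1 (V1 l) (X j) c' = (if l = 1 \<and> c' = cQ then (if j = 0 then 1 else 0) else 0)
      + (if c' = aidx l then (if j = l - 1 then real (st (l-1)) else 0) else 0)" if j: "j \<le> k" for j c'
  proof -
    have "mv d1 (V1 l) (X j) c' = (if l = 1 \<and> c' = cQ then X j cP else 0) + (if c' = aidx l then X j (sidx (l-1)) else 0)"
      unfolding mv_def V1_def by (rule sum_delta2) (use lk' in simp_all)
    also have "\<dots> = (if l = 1 \<and> c' = cQ then (if j = 0 then 1 else 0) else 0)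
      + (if c' = aidx l then (if j = l - 1 then real (st (l-1)) else 0) else 0)"
      using X[OF j, of cP] X[OF j, of "sidx (l-1)"] lk' by (simp add: E1_P E1_S)
    finally show ?thesis .
  qed
  define Xt where "Xt = (\<lambda>i c. (\<Sum>j\<le>i. mv d1 (V1 l) (X j) c) / (real i + 1) + X i c)"
  have XtE: "Xt i' c' = (if c' = sidx l then 0 else E1 l i' c')" if i': "i' \<le> k" and c': "c' < d1" for i' c'
  proof -
    have S: "(\<Sum>j\<le>i'. mv d1 (V1 l) (X j) c') = (\<Sum>j\<le>i'. (if l = 1 \<and> c' = cQ then (if j = 0 then 1 else 0) else 0)
      + (if c' = aidx l then (if j = l - 1 then real (st (l-1)) else 0) else 0))"
      by (rule sum.cong) (use i' in \<open>simp_all add: mvV\<close>)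
    have Xi: "X i' c' = E1 (l-1) i' c'" using X[OF i' c'] .
    show ?thesis
    proof (cases "c' = cQ")
      case True
      have "(\<Sum>j\<le>i'. mv d1 (V1 l) (X j) c') = (if l = 1 then 1 else 0)" unfolding S using True by simp
      then show ?thesis using True unfolding Xt_def Xi using l1 by (auto simp: E1_Q)
    next
      case cQ: False
      show ?thesis
      proof (cases "c' = aidx l")
        case True
        have "(\<Sum>j\<le>i'. mv d1 (V1 l) (X j) c') = (if l - 1 \<le> i' then real (st (l-1)) else 0)"
          unfolding S using True by simp
        then show ?thesis using True l1 unfolding Xt_def Xi by (auto simp: E1_A)
      next
        case False
        have "(\<Sum>j\<le>i'. mv d1 (V1 l) (X j) c') = 0" unfolding S using False cQ by simp
        then have "Xt i' c' = E1 (l-1) i' c'" unfolding Xt_def Xi by simp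
        also have "\<dots> = (if c' = sidx l then 0 else E1 l i' c')"
          using c' False cQ l1
          by (cases rule: coord_cases) (auto simp: E1_P E1_Q E1_R E1_S E1_A)
        finally show ?thesis .
      qed
    qed
  qed
  define tv where "tv = (real l + 1) * (if l - 1 \<le> i then real (st (l-1)) / (real i + 1) else 0) + real N * rv i + M1 / (real i + 1)"
  have t: "mv d1 (W1a l) (Xt i) a = tv" for a
  proof -
    have "mv d1 (W1a l) (Xt i) a = (real l + 1) * Xt i (aidx l) + real N * Xt i cR + M1 * Xt i cQ"
      unfolding mv_def W1a_def by (rule sum_delta3) (use lk in simp_all)
    also have "\<dots> = tv" using i lk l1 by (simp add: XtE E1_A E1_R E1_Q tv_def)
    finally show ?thesis .
  qed
  have mlp: "(\<Sum>a<m1. W2a l c a * max 0 (mv d1 (W1a l) (Xt i) a + b1a l a)) = (if c = sidx l \<and> i = l then real (st l) else 0)"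
  proof (cases "c = sidx l")
    case True
    have "(\<Sum>a<m1. W2a l c a * max 0 (mv d1 (W1a l) (Xt i) a + b1a l a))
       = (\<Sum>a<3*(N*R). (\<lambda>q t. val q * coef t * max 0 (tv - cen l q + off t)) (a div 3) (a mod 3))"
      unfolding m1_def W2a_def b1a_def t using True by (simp add: mult.assoc algebra_simps)
    also have "\<dots> = (\<Sum>q<N*R. val q * coef 0 * max 0 (tv - cen l q + off 0) + val q * coef 1 * max 0 (tv - cen l q + off 1)
        + val q * coef 2 * max 0 (tv - cen l q + off 2))"
      by (rule sum3)
    also have "\<dots> = (\<Sum>q<N*R. val q * hat (tv - cen l q))"
      by (simp only: hat_val)
    also have "\<dots> = (if i = l then real (st l) else 0)" by (rule hatsum[OF l1 lk i tv_def])
    finally show ?thesis using True by simp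
  next
    case False
    then show ?thesis unfolding W2a_def by simp
  qed
  have "apply_layer d1 m1 (lay1 l) X i c = Xt i c + ((\<Sum>a<m1. W2a l c a * max 0 (mv d1 (W1a l) (Xt i) a + b1a l a)) + 0)"
    unfolding lay1_def apply_layer_unif Xt_def Let_def by simp
  also have "\<dots> = E1 l i c" unfolding mlp XtE[OF i c] using l1 by (auto simp: E1_S)
  finally show ?thesis .
qed


lemma inv1: "l \<le> k \<Longrightarrow> j \<le> k \<Longrightarrow> c < d1 \<Longrightarrow> Xs l j c = E1 l j c"
proof (induction l arbitrary: j c)
  case 0 then show ?case by (simp add: Xs_def base)
next
  case (Suc l)
  show ?case unfolding Xs_Suc
    by (rule step1) (use Suc in auto)
qed

lemma run1: "tf_run T1 ts = Xs k"
  unfolding tf_run_def T1_def Xs_def X0_def using foldl_layers[of d1 m1 "\<lambda>i. emb1 (ts ! i)" lay1 k] by (simp del: upt_Suc)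

lemma out1: "tf_outputs T1 (vocab N R) ts (Subj (khop g s0 rs))"
proof -
  have lts: "length ts - 1 = k" using len by (simp add: ts_def)
  have "khop g s0 rs = st k" unfolding st_def using len by simp
  moreover have "tf_outputs T1 (vocab N R) ts (Subj (st k))"
  proof (rule readout[where co = "sidx k" and cq = cQ and k = k])
    show "sidx k < tf_dim T1" "cQ < tf_dim T1" "sidx k \<noteq> cQ" by (auto simp: T1_def)
    show "tf_unemb T1 (Subj s) = (\<lambda>c. if c = sidx k then 2 * real s else if c = cQ then - ((real s)\<^sup>2 * (real k + 1)) else 0)" for s
      by (simp add: T1_def unemb1_def)
    show "tf_unemb T1 (Rel r) = (\<lambda>c. 0)" for r by (simp add: T1_def unemb1_def)
    show "tf_run T1 ts (length ts - 1) (sidx k) = real (st k)"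
      unfolding run1 lts using inv1[of k k "sidx k"] by (simp add: E1_S)
    show "tf_run T1 ts (length ts - 1) cQ = 1 / (real k + 1)"
      unfolding run1 lts using inv1[of k k cQ] k1 by (simp add: E1_Q)
    show "st k \<in> {1..N}" by (rule st_range)
  qed
  ultimately show ?thesis by simp
qed

end

context hop1 begin

lemma T1_solves: "solves_khop T1 N R k g"
  unfolding solves_khop_def
proof (intro ballI allI impI)
  fix s0 rs assume "s0 \<in> {1..N}" "length rs = k" "set rs \<subseteq> {1..R}"
  then interpret inst1 N R k g s0 rs by unfold_locales
  show "tf_outputs T1 (vocab N R) (Subj s0 # map Rel rs) (Subj (khop g s0 rs))"
    using out1 by (simp add: ts_def)
qed

lemma T1_props: "length (tf_layers T1) = k" "tf_dim T1 = 4 + 2*k" "tf_width T1 = 3*N*R"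
  by (simp_all add: T1_def d1_def m1_def)

end

fun enc :: "nat \<Rightarrow> nat list \<Rightarrow> nat" where
  "enc R [] = 0"
| "enc R (r # rs) = (r - 1) + R * enc R rs"

fun dec :: "nat \<Rightarrow> nat \<Rightarrow> nat \<Rightarrow> nat list" where
  "dec R 0 a = []"
| "dec R (Suc k) a = (a mod R + 1) # dec R k (a div R)"

lemma dec_enc: "R \<ge> 1 \<Longrightarrow> set rs \<subseteq> {1..R} \<Longrightarrow> dec R (length rs) (enc R rs) = rs"
proof (induction rs)
  case Nil then show ?case by simp
next
  case (Cons r rs)
  then have r: "1 \<le> r" "r \<le> R" by auto
  then have "r - 1 < R" by linarith
  then have "(r - 1 + R * enc R rs) mod R = r - 1" "(r - 1 + R * enc R rs) div R = enc R rs"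
    using Cons.prems(1) by auto
  then show ?case using Cons r by simp
qed

lemma enc_lt: "R \<ge> 1 \<Longrightarrow> set rs \<subseteq> {1..R} \<Longrightarrow> enc R rs < R ^ length rs"
proof (induction rs)
  case Nil then show ?case by simp
next
  case (Cons r rs)
  then have r: "1 \<le> r" "r \<le> R" and e: "enc R rs + 1 \<le> R ^ length rs" by auto
  have "enc R (r # rs) = r - 1 + R * enc R rs" by simp
  also have "\<dots> < R + R * enc R rs" using r by linarith
  also have "\<dots> = R * (enc R rs + 1)" by (simp add: algebra_simps)
  also have "\<dots> \<le> R * R ^ length rs" using mult_le_mono2[OF e, of R] by simp
  finally show ?case by simp
qed

lemma enc_sum: "set rs \<subseteq> {1..R} \<Longrightarrow> real (enc R rs) = (\<Sum>i<length rs. real R ^ i * (real (rs ! i) - 1))"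
proof (induction rs)
  case Nil then show ?case by simp
next
  case (Cons r rs)
  then have r: "1 \<le> r" by auto
  have "real (enc R (r # rs)) = (real r - 1) + real R * real (enc R rs)" using r by (simp add: of_nat_diff)
  also have "\<dots> = (real r - 1) + real R * (\<Sum>i<length rs. real R ^ i * (real (rs ! i) - 1))" using Cons by simp
  also have "\<dots> = (\<Sum>i<Suc (length rs). real R ^ i * (real ((r # rs) ! i) - 1))"
    by (subst sum.lessThan_Suc_shift) (simp add: sum_distrib_left mult.assoc)
  finally show ?case by simp
qed

lemma dec_range: "R \<ge> 1 \<Longrightarrow> set (dec R k a) \<subseteq> {1..R}"
proof (induction k arbitrary: a)
  case 0 then show ?case by simp
next
  case (Suc k)
  have "a mod R < R" using Suc.prems by simp
  then have "a mod R + 1 \<le> R" by simp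
  then show ?case using Suc by simp
qed

lemma sum2:
  "(\<Sum>a<2*n. f (a div 2) (a mod 2)) = (\<Sum>q<n. f q 0 + f q (1::nat))"
proof (induction n)
  case 0 then show ?case by simp
next
  case (Suc n)
  have e: "(2*n+1) div 2 = n" "(2*n+1) mod 2 = 1" "(2*n) div 2 = n" "(2*n) mod 2 = 0" by presburger+
  have s: "2 * Suc n = Suc (Suc (2*n))" by simp
  have "(\<Sum>a<2*Suc n. f (a div 2) (a mod 2)) = (\<Sum>a<2*n. f (a div 2) (a mod 2)) + f ((2*n) div 2) ((2*n) mod 2)
      + f ((2*n+1) div 2) ((2*n+1) mod 2)"
    unfolding s lessThan_Suc by (simp add: add.commute add.left_commute)
  then show ?case using Suc by (simp only: e sum.lessThan_Suc) (simp add: add.assoc)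
qed

lemma telescope:
  fixes T :: "nat \<Rightarrow> real"
  shows "(\<Sum>b\<le>z. T b - (if b = 0 then 0 else T (b - 1))) = T z"
  by (induction z) auto

lemma telescope2:
  fixes T :: "nat \<Rightarrow> real"
  assumes "z < n"
  shows "(\<Sum>b<n. if b \<le> z then T b - (if b = 0 then 0 else T (b - 1)) else 0) = T z"
proof -
  have "(\<Sum>b<n. if b \<le> z then T b - (if b = 0 then 0 else T (b - 1)) else 0)
     = (\<Sum>b\<in>{..<n} \<inter> {b. b \<le> z}. T b - (if b = 0 then 0 else T (b - 1)))"
    by (simp add: sum.inter_restrict)
  also have "{..<n} \<inter> {b. b \<le> z} = {..z}" using assms by auto
  finally show ?thesis using telescope by simp
qed

lemma pos_sep_lt:
  assumes "l < i" "i \<le> k"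
  shows "1/(real i + 1) - 1/(real l + 1) \<le> - (1 / (real k + 1)^2)"
proof -
  define P where "P = (real i + 1) * (real l + 1)"
  have eq: "1/(real i + 1) - 1/(real l + 1) = (real l - real i) / P"
    unfolding P_def by (simp add: field_simps)
  have P0: "P > 0" unfolding P_def by simp
  have "real l - real i \<le> -1" using assms by linarith
  then have a: "(real l - real i) / P \<le> -1 / P" using divide_right_mono[of _ "-1" P] P0 by simp
  have "P \<le> (real k + 1)^2"
    using assms unfolding P_def by (simp add: power2_eq_square mult_mono)
  then have "1 / (real k + 1)^2 \<le> 1 / P" using P0 by (simp add: frac_le)
  then show ?thesis unfolding eq using a by simp
qed

lemma relu_pair:
  fixes U H :: real
  assumes "\<bar>U\<bar> \<le> H - 1" "H \<ge> 1"
  shows "max 0 (U + 2*H*(real z - real b) + H) - max 0 (2*H*(real z - real b) + H) = (if b \<le> z then U else 0)"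
proof (cases "b \<le> z")
  case True
  then have "real z - real b \<ge> 0" by simp
  then have h: "2*H*(real z - real b) \<ge> 0" using assms by simp
  have "U \<ge> -(H - 1)" using assms(1) by linarith
  then have "U + 2*H*(real z - real b) + H \<ge> 0" "2*H*(real z - real b) + H \<ge> 0" using h assms by linarith+
  then show ?thesis using True by simp
next
  case False
  then have "real z - real b \<le> -1" by simp
  then have "2*H*(real z - real b) \<le> 2*H*(-1)" by (rule mult_left_mono) (use assms in auto)
  then have "2*H*(real z - real b) \<le> -2*H" by simp
  have "U \<le> H - 1" using assms(1) by linarith
  then have "U + 2*H*(real z - real b) + H \<le> 0" "2*H*(real z - real b) + H \<le> 0" using \<open>2*H*(real z - real b) \<le> -2*H\<close> assms by linarith+
  then show ?thesis using False by simp
qed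

locale hop2 =
  fixes N R k :: nat and g :: "nat \<Rightarrow> nat \<Rightarrow> nat"
  assumes N1: "N \<ge> 1" and R1: "R \<ge> 1" and k1: "k \<ge> 1"
    and bij: "\<forall>r\<in>{1..R}. bij_betw (g r) {1..N} {1..N}"
begin

definition "d2 = 6 + R^k"
definition "m2 = 2 * R^k"
definition "eP = (0::nat)"
definition "eQ = (1::nat)"
definition "eD = (2::nat)"
definition "eO = (3::nat)"
definition "eR = (4::nat)"
definition "eZ = (5::nat)"
definition "uidx a = 6 + (a::nat)"

lemma e_simps[simp]:
  "eP \<noteq> eQ" "eP \<noteq> eD" "eP \<noteq> eO" "eP \<noteq> eR" "eP \<noteq> eZ"
  "eQ \<noteq> eP" "eQ \<noteq> eD" "eQ \<noteq> eO" "eQ \<noteq> eR" "eQ \<noteq> eZ"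
  "eD \<noteq> eP" "eD \<noteq> eQ" "eD \<noteq> eO" "eD \<noteq> eR" "eD \<noteq> eZ"
  "eO \<noteq> eP" "eO \<noteq> eQ" "eO \<noteq> eD" "eO \<noteq> eR" "eO \<noteq> eZ"
  "eR \<noteq> eP" "eR \<noteq> eQ" "eR \<noteq> eD" "eR \<noteq> eO" "eR \<noteq> eZ"
  "eZ \<noteq> eP" "eZ \<noteq> eQ" "eZ \<noteq> eD" "eZ \<noteq> eO" "eZ \<noteq> eR"
  "uidx a \<noteq> eP" "uidx a \<noteq> eQ" "uidx a \<noteq> eD" "uidx a \<noteq> eO" "uidx a \<noteq> eR" "uidx a \<noteq> eZ"
  "eP \<noteq> uidx a" "eQ \<noteq> uidx a" "eD \<noteq> uidx a" "eO \<noteq> uidx a" "eR \<noteq> uidx a" "eZ \<noteq> uidx a"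
  "(uidx a = uidx b) = (a = b)"
  "\<not> 6 \<le> eP" "\<not> 6 \<le> eQ" "\<not> 6 \<le> eD" "\<not> 6 \<le> eO" "\<not> 6 \<le> eR" "\<not> 6 \<le> eZ"
  "6 \<le> uidx a" "uidx a - 6 = a"
  by (auto simp: eP_def eQ_def eD_def eO_def eR_def eZ_def uidx_def)

lemma e_lt[simp]: "eP < d2" "eQ < d2" "eD < d2" "eO < d2" "eR < d2" "eZ < d2" "a < R^k \<Longrightarrow> uidx a < d2"
  by (auto simp: eP_def eQ_def eD_def eO_def eR_def eZ_def uidx_def d2_def)

lemma ecoord_cases:
  assumes "c < d2"
  obtains "c = eP" | "c = eQ" | "c = eD" | "c = eO" | "c = eR" | "c = eZ" | a where "a < R^k" "c = uidx a"
proof -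
  consider "c \<le> 5" | "c \<ge> 6" by linarith
  then show ?thesis
  proof cases
    case 1 then show ?thesis using that unfolding eP_def eQ_def eD_def eO_def eR_def eZ_def by linarith
  next
    case 2
    then have "c = uidx (c - 6)" "c - 6 < R^k" using assms by (auto simp: uidx_def d2_def)
    then show ?thesis using that(7) by blast
  qed
qed

definition "Tv s a = real (khop g s (dec R k a))"
definition "Uv s a = Tv s a - (if a = 0 then 0 else Tv s (a - 1))"

definition emb2 :: "token \<Rightarrow> vec" where
  "emb2 t = (case t of Subj s \<Rightarrow> (\<lambda>c. if c = eP \<or> c = eD then 1 else if 6 \<le> c then Uv s (c - 6) else 0)
                     | Rel r \<Rightarrow> (\<lambda>c. if c = eR then real r else 0))"

definition V2 :: "nat \<Rightarrow> mat" where
  "V2 l = (\<lambda>c c'. (if (l = 1 \<and> c = eQ) \<and> c' = eP then 1 else 0) + (if (l = k \<and> (c = eZ \<or> 6 \<le> c)) \<and> c' = c then 1 else 0))"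

definition "Wb = real (R^k) + 1"
definition "Kb = Wb * (real k + 1)^2"
definition "K2 = Kb + Wb"

definition W1p :: "nat \<Rightarrow> mat" where
  "W1p l = (\<lambda>a c'. (if c' = eR then (if a = 0 then real R ^ (l-1) else 0) else 0)
     + (if c' = eQ then (if a \<le> 1 then Kb else 0) else 0) + (if c' = eD then (if a \<le> 1 then - K2 else 0) else 0))"
definition b1p :: "nat \<Rightarrow> vec" where
  "b1p l = (\<lambda>a. if a = 0 then - (real R ^ (l-1)) - Kb / (real l + 1) else if a = 1 then 1 - Kb / (real l + 1) else 0)"
definition W2p :: mat where
  "W2p = (\<lambda>c a. (if c = eZ \<and> a = 0 then 1 else 0) + (if c = eD \<and> a = 1 then 1 else 0))"

definition "Hb = real N + 1"
definition W1f :: mat where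
  "W1f = (\<lambda>a c'. (if c' = uidx (a div 2) then (if a mod 2 = 0 then real k + 1 else 0) else 0)
     + (if c' = eZ then 2 * Hb * (real k + 1) else 0) + (if c' = eR then 2 * Hb * real R ^ (k-1) else 0))"
definition b1f :: vec where
  "b1f = (\<lambda>a. - (2 * Hb * real R ^ (k-1)) - 2 * Hb * real (a div 2) + Hb)"
definition W2f :: mat where
  "W2f = (\<lambda>c a. if c = eO then (if a mod 2 = 0 then 1 else -1) else 0)"

definition lay2 :: "nat \<Rightarrow> layer" where
  "lay2 l = (if l < k then ([((\<lambda>_ _. 0), (\<lambda>_ _. 0), V2 l)], W1p l, b1p l, W2p, (\<lambda>_. 0))
             else ([((\<lambda>_ _. 0), (\<lambda>_ _. 0), V2 l)], W1f, b1f, W2f, (\<lambda>_. 0)))"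

definition unemb2 :: "token \<Rightarrow> vec" where
  "unemb2 t = (case t of Subj s \<Rightarrow> (\<lambda>c. if c = eO then 2 * real s else if c = eQ then (- ((real s)^2 * (real k + 1))) else 0)
                       | Rel r \<Rightarrow> (\<lambda>c. 0))"
definition T2 :: transformer where
  "T2 = \<lparr>tf_dim = d2, tf_width = m2, tf_emb = emb2, tf_layers = map lay2 [1..<Suc k], tf_unemb = unemb2\<rparr>"

lemma Tv_range: "Tv s a \<in> {1..real N}" if "s \<in> {1..N}"
proof -
  have "khop g s (dec R k a) \<in> {1..N}" using khop_range[OF bij that dec_range[OF R1]] .
  then show ?thesis unfolding Tv_def by auto
qed

lemma Uv_bound: "s \<in> {1..N} \<Longrightarrow> \<bar>Uv s a\<bar> \<le> Hb - 1"
  using Tv_range[of s a] Tv_range[of s "a-1"] unfolding Uv_def Hb_def by (auto simp: abs_le_iff)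

end

lemma sum_shift_k:
  fixes f :: "nat \<Rightarrow> real"
  assumes "k \<ge> 1"
  shows "(\<Sum>j\<le>k. if 1 \<le> j \<and> j \<le> k - 1 then f j else 0) + f k = (\<Sum>i<k. f (Suc i))"
proof -
  have "(\<Sum>j\<le>k. if 1 \<le> j \<and> j \<le> k - 1 then f j else 0) = (\<Sum>j\<le>k. if j \<in> {1..<k} then f j else 0)"
    by (rule sum.cong) (use assms in auto)
  also have "\<dots> = sum f ({..k} \<inter> {1..<k})" by (simp add: sum.inter_restrict)
  also have "{..k} \<inter> {1..<k} = {1..<k}" by auto
  finally have a: "(\<Sum>j\<le>k. if 1 \<le> j \<and> j \<le> k - 1 then f j else 0) = sum f {1..<k}" .
  have b: "sum f {1..<Suc k} = sum f {1..<k} + f k" using assms by (rule sum.atLeastLessThan_Suc)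
  have c: "sum f {Suc 0..<Suc k} = (\<Sum>i\<in>{0..<k}. f (Suc i))" by (rule sum.shift_bounds_Suc_ivl)
  show ?thesis using a b c by (simp add: atLeast0LessThan)
qed

locale inst2 = hop2 +
  fixes s0 :: nat and rs :: "nat list"
  assumes s0: "s0 \<in> {1..N}" and len: "length rs = k" and rsR: "set rs \<subseteq> {1..R}"
begin

definition "rv j = (if j = 0 then 0 else real (rs ! (j-1)))"
definition "ts = Subj s0 # map Rel rs"

definition E2 :: "nat \<Rightarrow> nat \<Rightarrow> nat \<Rightarrow> real" where
  "E2 l j c = (if c = eP then (if j = 0 then 1 else 0)
    else if c = eQ then (if 1 \<le> l then 1 / (real j + 1) else 0)
    else if c = eD then (if j \<le> l then 1 else 0)
    else if c = eO then 0
    else if c = eR then rv j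
    else if c = eZ then (if 1 \<le> j \<and> j \<le> l then real R ^ (j-1) * (rv j - 1) else 0)
    else if 6 \<le> c then (if j = 0 then Uv s0 (c - 6) else 0) else 0)"

lemma E2_simps:
  "E2 l j eP = (if j = 0 then 1 else 0)"
  "E2 l j eQ = (if 1 \<le> l then 1 / (real j + 1) else 0)"
  "E2 l j eD = (if j \<le> l then 1 else 0)"
  "E2 l j eO = 0"
  "E2 l j eR = rv j"
  "E2 l j eZ = (if 1 \<le> j \<and> j \<le> l then real R ^ (j-1) * (rv j - 1) else 0)"
  "E2 l j (uidx a) = (if j = 0 then Uv s0 a else 0)"
  unfolding E2_def by simp_all

lemma rv_range2: "1 \<le> i \<Longrightarrow> i \<le> k \<Longrightarrow> rv i = real (rs ! (i-1)) \<and> rs ! (i-1) \<in> {1..R}"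
proof -
  assume "1 \<le> i" "i \<le> k"
  then have "rs ! (i-1) \<in> set rs" using len by auto
  then show ?thesis using rsR \<open>1 \<le> i\<close> by (auto simp: rv_def)
qed

lemma rv_bounds2: "i \<le> k \<Longrightarrow> 0 \<le> rv i \<and> rv i \<le> real R"
proof (cases "i = 0")
  case True then show ?thesis by (simp add: rv_def)
next
  case False
  assume "i \<le> k"
  then show ?thesis using rv_range2[of i] False by auto
qed

definition "X0 = (\<lambda>i. emb2 (ts ! i))"
definition "Xs l = rec_nat X0 (\<lambda>n X. apply_layer d2 m2 (lay2 (Suc n)) X) l"

lemma Xs_Suc: "Xs (Suc l) = apply_layer d2 m2 (lay2 (Suc l)) (Xs l)"
  by (simp add: Xs_def)

lemma base2: "j \<le> k \<Longrightarrow> c < d2 \<Longrightarrow> X0 j c = E2 0 j c"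
proof -
  assume j: "j \<le> k" and c: "c < d2"
  show ?thesis
  proof (cases "j = 0")
    case True
    show ?thesis using c
      by (cases rule: ecoord_cases) (simp_all add: True X0_def ts_def emb2_def E2_simps rv_def)
  next
    case False
    then have tsj: "ts ! j = Rel (rs ! (j-1))" using j len by (cases j) (auto simp: ts_def)
    show ?thesis using c
      by (cases rule: ecoord_cases) (simp_all add: X0_def tsj emb2_def E2_simps rv_def False)
  qed
qed

lemma gate:
  assumes l1: "1 \<le> l" and lk: "l < k" and i: "i \<le> k"
  shows "Kb * (1 / (real i + 1) - 1 / (real l + 1)) - K2 * (if i \<le> l - 1 then 1 else 0)
     = (if i = l then 0 else Kb * (1 / (real i + 1) - 1 / (real l + 1)) - K2 * (if i \<le> l - 1 then 1 else 0))
   \<and> (i \<noteq> l \<longrightarrow> Kb * (1 / (real i + 1) - 1 / (real l + 1)) - K2 * (if i \<le> l - 1 then 1 else 0) \<le> - Wb)"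
proof -
  have W0: "Wb \<ge> 1" unfolding Wb_def by simp
  have K0: "Kb \<ge> 0" unfolding Kb_def using W0 by simp
  consider "i = l" | "l < i" | "i < l" by linarith
  then show ?thesis
  proof cases
    case 1 then show ?thesis using l1 by auto
  next
    case 2
    have "1 / (real i + 1) - 1 / (real l + 1) \<le> - (1 / (real k + 1)^2)" by (rule pos_sep_lt[OF 2 i])
    then have "Kb * (1 / (real i + 1) - 1 / (real l + 1)) \<le> Kb * (- (1 / (real k + 1)^2))"
      using K0 by (rule mult_left_mono)
    also have "\<dots> = - Wb" unfolding Kb_def by simp
    finally show ?thesis using 2 by auto
  next
    case 3
    have "1 / (real i + 1) - 1 / (real l + 1) \<le> 1"
    proof -
      have "1 / (real i + 1) \<le> 1" by simp
      moreover have "1 / (real l + 1) \<ge> 0" by simp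
      ultimately show ?thesis by linarith
    qed
    then have "Kb * (1 / (real i + 1) - 1 / (real l + 1)) \<le> Kb * 1" using K0 by (rule mult_left_mono)
    then show ?thesis using 3 unfolding K2_def by auto
  qed
qed

end

context inst2 begin

lemma m2_ge: "2 \<le> m2" unfolding m2_def using R1 by simp

lemma step2:
  assumes l1: "1 \<le> l" and lk: "l < k"
    and X: "\<And>j c. j \<le> k \<Longrightarrow> c < d2 \<Longrightarrow> X j c = E2 (l-1) j c"
    and i: "i \<le> k" and c: "c < d2"
  shows "apply_layer d2 m2 (lay2 l) X i c = E2 l i c"
proof -
  have lay: "lay2 l = ([((\<lambda>_ _. 0), (\<lambda>_ _. 0), V2 l)], W1p l, b1p l, W2p, (\<lambda>_. 0))"
    using lk by (simp add: lay2_def)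
  have mvV: "mv d2 (V2 l) (X j) c' = (if l = 1 \<and> c' = eQ then (if j = 0 then 1 else 0) else 0)"
    if j: "j \<le> k" and c': "c' < d2" for j c'
  proof -
    have "mv d2 (V2 l) (X j) c' = (if l = 1 \<and> c' = eQ then X j eP else 0) + (if l = k \<and> (c' = eZ \<or> 6 \<le> c') then X j c' else 0)"
      unfolding mv_def V2_def by (rule sum_delta2) (use c' in simp_all)
    then show ?thesis using lk X[OF j, of eP] by (simp add: E2_simps)
  qed
  define Xt where "Xt = (\<lambda>i c. (\<Sum>j\<le>i. mv d2 (V2 l) (X j) c) / (real i + 1) + X i c)"
  have XtE: "Xt i' c' = (if c' = eQ then 1 / (real i' + 1) else E2 (l-1) i' c')" if i': "i' \<le> k" and c': "c' < d2" for i' c'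
  proof -
    have "(\<Sum>j\<le>i'. mv d2 (V2 l) (X j) c') = (\<Sum>j\<le>i'. (if l = 1 \<and> c' = eQ then (if j = 0 then 1 else 0) else 0))"
      by (rule sum.cong) (use i' c' in \<open>simp_all add: mvV\<close>)
    also have "\<dots> = (if l = 1 \<and> c' = eQ then 1 else 0)"
    proof (cases "l = 1 \<and> c' = eQ")
      case True then show ?thesis by simp
    next
      case False then show ?thesis by (simp only: if_False sum.neutral_const)
    qed
    finally show ?thesis unfolding Xt_def using X[OF i' c'] l1 by (auto simp: E2_simps)
  qed
  define G where "G = Kb * (1 / (real i + 1) - 1 / (real l + 1)) - K2 * (if i \<le> l - 1 then 1 else 0)"
  have inp: "mv d2 (W1p l) (Xt i) a = (if a = 0 then real R ^ (l-1) else 0) * rv i + (if a \<le> 1 then Kb else 0) * (1 / (real i + 1))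
      + (if a \<le> 1 then - K2 else 0) * (if i \<le> l - 1 then 1 else 0)" for a
  proof -
    have "mv d2 (W1p l) (Xt i) a = (if a = 0 then real R ^ (l-1) else 0) * Xt i eR + (if a \<le> 1 then Kb else 0) * Xt i eQ
      + (if a \<le> 1 then - K2 else 0) * Xt i eD"
      unfolding mv_def W1p_def by (rule sum_delta3) simp_all
    then show ?thesis using i by (simp add: XtE E2_simps)
  qed
  have inp0: "mv d2 (W1p l) (Xt i) 0 + b1p l 0 = real R ^ (l-1) * (rv i - 1) + G"
    unfolding inp b1p_def G_def by (simp add: algebra_simps)
  have inp1: "mv d2 (W1p l) (Xt i) 1 + b1p l 1 = 1 + G"
    unfolding inp b1p_def G_def by (simp add: algebra_simps)
  have mlp: "(\<Sum>a<m2. W2p c a * max 0 (mv d2 (W1p l) (Xt i) a + b1p l a))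
     = (if c = eZ then max 0 (real R ^ (l-1) * (rv i - 1) + G) else 0) + (if c = eD then max 0 (1 + G) else 0)"
  proof -
    have "(\<Sum>a<m2. W2p c a * max 0 (mv d2 (W1p l) (Xt i) a + b1p l a))
      = (if c = eZ then max 0 (mv d2 (W1p l) (Xt i) 0 + b1p l 0) else 0) + (if c = eD then max 0 (mv d2 (W1p l) (Xt i) 1 + b1p l 1) else 0)"
      unfolding W2p_def by (rule sum_delta2) (use m2_ge in simp_all)
    then show ?thesis unfolding inp0 inp1 .
  qed
  have W0: "Wb \<ge> 1" unfolding Wb_def by simp
  have Gl: "i = l \<Longrightarrow> G = 0" unfolding G_def using l1 by auto
  have Gn: "i \<noteq> l \<Longrightarrow> G \<le> - Wb" unfolding G_def using gate[OF l1 lk i] by blast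
  have vb: "real R ^ (l-1) * (rv i - 1) \<le> Wb - 1"
  proof -
    have "rv i - 1 \<le> real R" using rv_bounds2[OF i] by simp
    then have "real R ^ (l-1) * (rv i - 1) \<le> real R ^ (l-1) * real R" by (rule mult_left_mono) simp
    also have "\<dots> = real R ^ l" using l1 by (metis Suc_diff_1 less_le_trans power_Suc2 zero_less_one)
    also have "\<dots> \<le> real R ^ k" using R1 lk by (intro power_increasing) auto
    finally show ?thesis unfolding Wb_def by simp
  qed
  have r0: "max 0 (real R ^ (l-1) * (rv i - 1) + G) = (if i = l then real R ^ (l-1) * (rv l - 1) else 0)"
  proof (cases "i = l")
    case True
    have "rv l \<ge> 1" using rv_range2[of l] l1 lk by auto
    then show ?thesis using True Gl by simp
  next
    case False then show ?thesis using Gn vb by simp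
  qed
  have r1: "max 0 (1 + G) = (if i = l then 1 else 0)"
    using Gl Gn W0 by (cases "i = l") auto
  have "apply_layer d2 m2 (lay2 l) X i c = Xt i c + ((\<Sum>a<m2. W2p c a * max 0 (mv d2 (W1p l) (Xt i) a + b1p l a)) + 0)"
    unfolding lay apply_layer_unif Xt_def Let_def by simp
  also have "\<dots> = E2 l i c" unfolding mlp r0 r1 XtE[OF i c]
    using c l1 by (cases rule: ecoord_cases) (auto simp: E2_simps)
  finally show ?thesis .
qed


lemma inv2: "l \<le> k - 1 \<Longrightarrow> j \<le> k \<Longrightarrow> c < d2 \<Longrightarrow> Xs l j c = E2 l j c"
proof (induction l arbitrary: j c)
  case 0 then show ?case by (simp add: Xs_def base2)
next
  case (Suc l)
  show ?case unfolding Xs_Suc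
    by (rule step2) (use Suc in auto)
qed

lemma final2:
  assumes X: "\<And>j c. j \<le> k \<Longrightarrow> c < d2 \<Longrightarrow> X j c = E2 (k-1) j c"
  shows "apply_layer d2 m2 (lay2 k) X k eO = real (khop g s0 rs)"
    and "apply_layer d2 m2 (lay2 k) X k eQ = 1 / (real k + 1)"
proof -
  have lay: "lay2 k = ([((\<lambda>_ _. 0), (\<lambda>_ _. 0), V2 k)], W1f, b1f, W2f, (\<lambda>_. 0))"
    by (simp add: lay2_def)
  have mvV: "mv d2 (V2 k) (X j) c' = (if k = 1 \<and> c' = eQ then X j eP else 0) + (if c' = eZ \<or> 6 \<le> c' then X j c' else 0)"
    if j: "j \<le> k" and c': "c' < d2" for j c'
    unfolding mv_def V2_def
    using sum_delta2[where P="k = 1 \<and> c' = eQ" and Q="k = k \<and> (c' = eZ \<or> 6 \<le> c')" and a=eP and b=c' and d=d2 and x="X j"] c'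
    by simp
  define Xt where "Xt = (\<lambda>i c. (\<Sum>j\<le>i. mv d2 (V2 k) (X j) c) / (real i + 1) + X i c)"
  have XQ: "Xt k eQ = 1 / (real k + 1)"
  proof -
    have "(\<Sum>j\<le>k. mv d2 (V2 k) (X j) eQ) = (\<Sum>j\<le>k. if k = 1 then (if j = 0 then 1 else 0) else 0)"
    proof (rule sum.cong)
      fix j assume "j \<in> {..k}"
      then show "mv d2 (V2 k) (X j) eQ = (if k = 1 then (if j = 0 then 1 else 0) else 0)"
        using X[of j eP] mvV[of j eQ] by (simp add: E2_simps)
    qed simp
    also have "\<dots> = (if k = 1 then 1 else 0)"
      by (cases "k = 1") (simp, simp only: if_False sum.neutral_const)
    finally show ?thesis unfolding Xt_def using X[of k eQ] k1 by (auto simp: E2_simps)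
  qed
  have XR: "Xt k eR = rv k"
  proof -
    have "(\<Sum>j\<le>k. mv d2 (V2 k) (X j) eR) = 0"
      by (rule sum.neutral) (auto simp: mvV)
    then show ?thesis unfolding Xt_def using X[of k eR] by (simp add: E2_simps)
  qed
  have XO: "Xt k eO = 0"
  proof -
    have "(\<Sum>j\<le>k. mv d2 (V2 k) (X j) eO) = 0"
      by (rule sum.neutral) (auto simp: mvV)
    then show ?thesis unfolding Xt_def using X[of k eO] by (simp add: E2_simps)
  qed
  define S where "S = (\<Sum>j\<le>k. if 1 \<le> j \<and> j \<le> k - 1 then real R ^ (j-1) * (rv j - 1) else 0)"
  have XZ: "Xt k eZ = S / (real k + 1)"
  proof -
    have "(\<Sum>j\<le>k. mv d2 (V2 k) (X j) eZ) = S" unfolding S_def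
    proof (rule sum.cong)
      fix j assume "j \<in> {..k}"
      then show "mv d2 (V2 k) (X j) eZ = (if 1 \<le> j \<and> j \<le> k - 1 then real R ^ (j-1) * (rv j - 1) else 0)"
        using X[of j eZ] mvV[of j eZ] by (simp add: E2_simps)
    qed simp
    moreover have "\<not> k \<le> k - 1" using k1 by simp
    then have "X k eZ = 0" using X[of k eZ] by (simp add: E2_simps)
    ultimately show ?thesis unfolding Xt_def by simp
  qed
  have XU: "Xt k (uidx a) = Uv s0 a / (real k + 1)" if a: "a < R^k" for a
  proof -
    have "(\<Sum>j\<le>k. mv d2 (V2 k) (X j) (uidx a)) = (\<Sum>j\<le>k. if j = 0 then Uv s0 a else 0)"
    proof (rule sum.cong)
      fix j assume "j \<in> {..k}"
      then show "mv d2 (V2 k) (X j) (uidx a) = (if j = 0 then Uv s0 a else 0)"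
        using X[of j "uidx a"] mvV[of j "uidx a"] a by (simp add: E2_simps)
    qed simp
    also have "\<dots> = Uv s0 a" by simp
    finally show ?thesis unfolding Xt_def using X[of k "uidx a"] k1 a by (simp add: E2_simps)
  qed
  define zn where "zn = enc R rs"
  have zn_lt: "zn < R^k" unfolding zn_def using enc_lt[OF R1 rsR] len by simp
  have zeq: "S + real R ^ (k-1) * (rv k - 1) = real zn"
  proof -
    have "S + real R ^ (k-1) * (rv k - 1) = (\<Sum>i<k. real R ^ (Suc i - 1) * (rv (Suc i) - 1))"
      unfolding S_def by (rule sum_shift_k[OF k1, of "\<lambda>j. real R ^ (j-1) * (rv j - 1)"])
    also have "\<dots> = (\<Sum>i<length rs. real R ^ i * (real (rs ! i) - 1))" using len by (simp add: rv_def)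
    also have "\<dots> = real zn" unfolding zn_def using enc_sum[OF rsR] by simp
    finally show ?thesis .
  qed
  have inp: "mv d2 W1f (Xt k) a + b1f a = (if a mod 2 = 0 then Uv s0 (a div 2) else 0) + 2 * Hb * (real zn - real (a div 2)) + Hb"
    if a: "a < m2" for a
  proof -
    have ad: "a div 2 < R^k" using a unfolding m2_def by simp
    have "mv d2 W1f (Xt k) a = (if a mod 2 = 0 then real k + 1 else 0) * Xt k (uidx (a div 2)) + 2 * Hb * (real k + 1) * Xt k eZ
        + 2 * Hb * real R ^ (k-1) * Xt k eR"
      unfolding mv_def W1f_def by (rule sum_delta3) (use ad in simp_all)
    also have "\<dots> = (if a mod 2 = 0 then Uv s0 (a div 2) else 0) + 2 * Hb * (S + real R ^ (k-1) * rv k)"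
    proof -
      have h1: "(real k + 1) * (Uv s0 (a div 2) / (real k + 1)) = Uv s0 (a div 2)" by simp
      have h2: "2 * Hb * (real k + 1) * (S / (real k + 1)) = 2 * Hb * S" by simp
      have h3: "(if a mod 2 = 0 then real k + 1 else 0) * (Uv s0 (a div 2) / (real k + 1)) = (if a mod 2 = 0 then Uv s0 (a div 2) else 0)"
        using h1 by simp
      show ?thesis unfolding XU[OF ad] XZ XR h3 h2 by (simp add: algebra_simps)
    qed
    also have "S + real R ^ (k-1) * rv k = real zn + real R ^ (k-1)" using zeq by (simp add: algebra_simps)
    finally show ?thesis unfolding b1f_def by (simp add: algebra_simps)
  qed
  have Hb1: "Hb \<ge> 1" unfolding Hb_def by simp
  have outO: "(\<Sum>a<m2. W2f eO a * max 0 (mv d2 W1f (Xt k) a + b1f a)) = Tv s0 zn"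
  proof -
    have "(\<Sum>a<m2. W2f eO a * max 0 (mv d2 W1f (Xt k) a + b1f a))
      = (\<Sum>a<2*R^k. (\<lambda>b t. (if t = 0 then 1 else -1) * max 0 ((if t = 0 then Uv s0 b else 0) + 2 * Hb * (real zn - real b) + Hb)) (a div 2) (a mod 2))"
      by (rule sum.cong) (simp_all add: m2_def inp W2f_def)
    also have "\<dots> = (\<Sum>b<R^k. max 0 (Uv s0 b + 2 * Hb * (real zn - real b) + Hb) - max 0 (2 * Hb * (real zn - real b) + Hb))"
      using sum2[of "\<lambda>b t. (if t = 0 then 1 else -1) * max 0 ((if t = 0 then Uv s0 b else 0) + 2 * Hb * (real zn - real b) + Hb)" "R^k"]
      by simp
    also have "\<dots> = (\<Sum>b<R^k. if b \<le> zn then Uv s0 b else 0)"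
      by (rule sum.cong) (simp_all add: relu_pair[OF Uv_bound[OF s0] Hb1])
    also have "\<dots> = Tv s0 zn" unfolding Uv_def by (rule telescope2[OF zn_lt])
    finally show ?thesis .
  qed
  have TvE: "Tv s0 zn = real (khop g s0 rs)"
    unfolding Tv_def zn_def using dec_enc[OF R1 rsR] len by simp
  show "apply_layer d2 m2 (lay2 k) X k eO = real (khop g s0 rs)"
    unfolding lay apply_layer_unif Let_def using outO XO TvE unfolding Xt_def by simp
  show "apply_layer d2 m2 (lay2 k) X k eQ = 1 / (real k + 1)"
    unfolding lay apply_layer_unif Let_def using XQ unfolding Xt_def by (simp add: W2f_def)
qed

lemma run2: "tf_run T2 ts = Xs k"
  unfolding tf_run_def T2_def Xs_def X0_def using foldl_layers[of d2 m2 "\<lambda>i. emb2 (ts ! i)" lay2 k] by (simp del: upt_Suc)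

lemma out2: "tf_outputs T2 (vocab N R) ts (Subj (khop g s0 rs))"
proof -
  have lts: "length ts - 1 = k" using len by (simp add: ts_def)
  have XK: "Xs k = apply_layer d2 m2 (lay2 k) (Xs (k-1))" using Xs_Suc[of "k-1"] k1 by simp
  have I: "\<And>j c. j \<le> k \<Longrightarrow> c < d2 \<Longrightarrow> Xs (k-1) j c = E2 (k-1) j c" by (rule inv2) auto
  show ?thesis
  proof (rule readout[where co = eO and cq = eQ and k = k])
    show "eO < tf_dim T2" "eQ < tf_dim T2" "eO \<noteq> eQ" by (auto simp: T2_def)
    show "tf_unemb T2 (Subj s) = (\<lambda>c. if c = eO then 2 * real s else if c = eQ then - ((real s)\<^sup>2 * (real k + 1)) else 0)" for s
      by (simp add: T2_def unemb2_def)
    show "tf_unemb T2 (Rel r) = (\<lambda>c. 0)" for r by (simp add: T2_def unemb2_def)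
    show "tf_run T2 ts (length ts - 1) eO = real (khop g s0 rs)"
      unfolding run2 lts XK by (rule final2(1)[OF I])
    show "tf_run T2 ts (length ts - 1) eQ = 1 / (real k + 1)"
      unfolding run2 lts XK by (rule final2(2)[OF I])
    show "khop g s0 rs \<in> {1..N}" using khop_range[OF bij s0 rsR] .
  qed
qed

end

context hop2 begin

lemma T2_solves: "solves_khop T2 N R k g"
  unfolding solves_khop_def
proof (intro ballI allI impI)
  fix s0 rs assume "s0 \<in> {1..N}" "length rs = k" "set rs \<subseteq> {1..R}"
  then interpret inst2 N R k g s0 rs by unfold_locales
  show "tf_outputs T2 (vocab N R) (Subj s0 # map Rel rs) (Subj (khop g s0 rs))"
    using out2 by (simp add: ts_def)
qed

lemma T2_props: "length (tf_layers T2) = k" "tf_dim T2 = 6 + R^k" "tf_width T2 = 2 * R^k"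
  by (simp_all add: T2_def d2_def m2_def)

end

lemma main_inner:
  fixes N R k :: nat and g :: "nat \<Rightarrow> nat \<Rightarrow> nat"
  assumes N1: "N \<ge> 1" and R1: "R \<ge> 1" and k1: "k \<ge> 1" and bij: "\<forall>r\<in>{1..R}. bij_betw (g r) {1..N} {1..N}"
  shows "let L = log 2 (real (N + R + k + 2)) in
         (\<exists>T. length (tf_layers T) = k \<and> solves_khop T N R k g \<and>
              real (tf_dim T) \<le> 7 * real k * L powr 0 \<and>
              real (tf_width T) \<le> 7 * real N * real R) \<and>
         (\<exists>T. length (tf_layers T) = k \<and> solves_khop T N R k g \<and>
              real (tf_dim T) \<le> 7 * real R ^ k * L powr 0 \<and>
              real (tf_width T) \<le> 7 * real R ^ k * L powr 0)"
proof -
  interpret A: hop1 N R k g using N1 R1 k1 bij by unfold_locales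
  interpret B: hop2 N R k g using N1 R1 k1 bij by unfold_locales
  define L where "L = log 2 (real (N + R + k + 2))"
  have "real (N + R + k + 2) > 1" by simp
  then have "L > 0" unfolding L_def by simp
  then have L0: "L powr 0 = 1" by simp
  have Rk: "real R ^ k \<ge> 1" using R1 by simp
  have "N * R \<ge> 1" using N1 R1 by (simp add: Suc_le_eq)
  then have NR: "real N * real R \<ge> 1" by (metis of_nat_1 of_nat_le_iff of_nat_mult)
  have ex1: "\<exists>T. length (tf_layers T) = k \<and> solves_khop T N R k g \<and>
              real (tf_dim T) \<le> 7 * real k * L powr 0 \<and>
              real (tf_width T) \<le> 7 * real N * real R"
  proof (intro exI conjI)
    show "length (tf_layers A.T1) = k" "solves_khop A.T1 N R k g" by (rule A.T1_props, rule A.T1_solves)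
    show "real (tf_dim A.T1) \<le> 7 * real k * L powr 0" unfolding A.T1_props L0 using k1 by simp
    show "real (tf_width A.T1) \<le> 7 * real N * real R" unfolding A.T1_props using NR by simp
  qed
  have ex2: "\<exists>T. length (tf_layers T) = k \<and> solves_khop T N R k g \<and>
              real (tf_dim T) \<le> 7 * real R ^ k * L powr 0 \<and>
              real (tf_width T) \<le> 7 * real R ^ k * L powr 0"
  proof (intro exI conjI)
    show "length (tf_layers B.T2) = k" "solves_khop B.T2 N R k g" by (rule B.T2_props, rule B.T2_solves)
    show "real (tf_dim B.T2) \<le> 7 * real R ^ k * L powr 0" unfolding B.T2_props L0 using Rk by simp
    show "real (tf_width B.T2) \<le> 7 * real R ^ k * L powr 0" unfolding B.T2_props L0 using Rk by simp
  qed
  show ?thesis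
    unfolding Let_def L_def[symmetric] using ex1 ex2 by blast
qed

theorem theorem3:
  "\<exists>C c::real. C > 0 \<and> c \<ge> 0 \<and>
    (\<forall>N R k::nat. \<forall>g::nat \<Rightarrow> nat \<Rightarrow> nat.
       N \<ge> 1 \<longrightarrow> R \<ge> 1 \<longrightarrow> k \<ge> 1 \<longrightarrow>
       (\<forall>r\<in>{1..R}. bij_betw (g r) {1..N} {1..N}) \<longrightarrow>
       (let L = log 2 (real (N + R + k + 2)) in
         (\<exists>T. length (tf_layers T) = k \<and> solves_khop T N R k g \<and>
              real (tf_dim T) \<le> C * real k * L powr c \<and>
              real (tf_width T) \<le> C * real N * real R) \<and>
         (\<exists>T. length (tf_layers T) = k \<and> solves_khop T N R k g \<and>
              real (tf_dim T) \<le> C * real R ^ k * L powr c \<and>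
              real (tf_width T) \<le> C * real R ^ k * L powr c)))"
proof -
  have "\<forall>N R k::nat. \<forall>g::nat \<Rightarrow> nat \<Rightarrow> nat.
       N \<ge> 1 \<longrightarrow> R \<ge> 1 \<longrightarrow> k \<ge> 1 \<longrightarrow>
       (\<forall>r\<in>{1..R}. bij_betw (g r) {1..N} {1..N}) \<longrightarrow>
       (let L = log 2 (real (N + R + k + 2)) in
         (\<exists>T. length (tf_layers T) = k \<and> solves_khop T N R k g \<and>
              real (tf_dim T) \<le> 7 * real k * L powr 0 \<and>
              real (tf_width T) \<le> 7 * real N * real R) \<and>
         (\<exists>T. length (tf_layers T) = k \<and> solves_khop T N R k g \<and>
              real (tf_dim T) \<le> 7 * real R ^ k * L powr 0 \<and>
              real (tf_width T) \<le> 7 * real R ^ k * L powr 0))"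
    using main_inner by blast
  then show ?thesis by (intro exI[of _ "7::real"] exI[of _ "0::real"]) simp
qed

end
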